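(* Let $q>3$ be prime, $A\in\mathbb{F}_q[T]$ monic irreducible with $a=\deg A$, $t\in\mathbb{R}^\times$, and $\psi\in\mathcal{C}_0^\infty(\mathbb{R}_{>0})$. Define $H(s)=\sum_{n\in\mathbb{Z}}\psi(q^n)q^{-ns}$, $c(n,0,s)=q^{ns}+\frac{q^{n(1-s)+1-2as}}{1-q^{-2as}}$, and \[ \mathcal{I}_{1} = \log q \int_{-\frac{\pi i}{\log q}}^{\frac{\pi i}{\log q}} H(s) \sum_{n \in \mathbb{Z}} q^{ns} \left|c \left(n, 0, \tfrac{1}{2}+it \right) \right|^{2} \frac{ds}{2\pi i}, \] the contour being along the imaginary axis. Then $\mathcal{I}_1\ll 1$.
   Context: $c(n,0,s)$ is the constant term of the Fourier--Whittaker expansion at $\infty$ of the Eisenstein series $E(g,s)=\sum_{\gamma\in\Gamma_\infty\backslash\Gamma_0(A)}\left(|\det(\gamma g)|/h((0,1)\gamma g)^2\right)^s$ for $\Gamma_0(A)$ at $g=\begin{pmatrix}T^n&x\\0&1\end{pmatrix}$. The bound is uniform as $A$ varies. *)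

theory Defs
  imports "HOL-Analysis.Analysis" "HOL-Computational_Algebra.Polynomial"
begin

definition qpow :: "nat \<Rightarrow> complex \<Rightarrow> complex" where
  "qpow q z = exp (z * of_real (ln (real q)))"

definition smooth_compact_pos :: "(real \<Rightarrow> complex) \<Rightarrow> bool" where
  "smooth_compact_pos psi \<longleftrightarrow>
     (\<exists>D :: nat \<Rightarrow> real \<Rightarrow> complex. D 0 = psi \<and>
        (\<forall>k x. (D k has_vector_derivative D (Suc k) x) (at x))) \<and>
     (\<exists>a b. 0 < a \<and> a \<le> b \<and> (\<forall>x. x \<notin> {a..b} \<longrightarrow> psi x = 0))"

text \<open>H(s) = sum over n in Z of psi(q^n) q^(-ns)  (a finite sum by compact support).\<close>
definition Hfun :: "nat \<Rightarrow> (real \<Rightarrow> complex) \<Rightarrow> complex \<Rightarrow> complex" where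
  "Hfun q psi s = (\<Sum>\<^sub>\<infinity>n::int. psi (real q powr of_int n) * qpow q (- of_int n * s))"

definition cterm :: "nat \<Rightarrow> nat \<Rightarrow> int \<Rightarrow> complex \<Rightarrow> complex" where
  "cterm q a n s = qpow q (of_int n * s)
     + qpow q (of_int n * (1 - s) + 1 - 2 * of_nat a * s) / (1 - qpow q (- 2 * of_nat a * s))"

text \<open>I_1 = log q * int_{-pi i/log q}^{pi i/log q} H(s) sum_n q^(ns) |c(n,0,1/2+it)|^2 ds/(2 pi i),
  along the imaginary axis s = i y (so ds/(2 pi i) = dy/(2 pi)), with the sum over n taken
  outside the integral (the inner series does not converge pointwise).\<close>
definition I1 :: "nat \<Rightarrow> (real \<Rightarrow> complex) \<Rightarrow> nat \<Rightarrow> real \<Rightarrow> complex" where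
  "I1 q psi a t = (\<Sum>\<^sub>\<infinity>n::int.
     (of_real (ln (real q)) *
        integral {- pi / ln (real q) .. pi / ln (real q)}
          (\<lambda>y. Hfun q psi (\<i> * of_real y) * qpow q (of_int n * (\<i> * of_real y)) / (2 * of_real pi)))
     * of_real ((cmod (cterm q a n (1/2 + \<i> * of_real t)))\<^sup>2))"

end

theory Submission
  imports Defs
begin

lemma exp_int_integral:
  fixes L::real and k::int assumes L: "L>0"
  shows "((\<lambda>y::real. exp (complex_of_real y * (\<i> * of_int k * of_real L))) has_integral
          (if k = 0 then of_real (2*pi/L) else 0)) {-pi/L..pi/L}"
proof (cases "k = 0")
  case True
  have "((\<lambda>y::real. (1::complex)) has_integral (Henstock_Kurzweil_Integration.content {-pi/L..pi/L} *\<^sub>R 1)) {-pi/L..pi/L}"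
    by (rule has_integral_const_real)
  moreover have "Henstock_Kurzweil_Integration.content {-pi/L..pi/L} = 2*pi/L" using L by (simp add: field_simps)
  ultimately show ?thesis using True by (simp add: scaleR_conv_of_real)
next
  case False
  define c where "c = \<i> * of_int k * of_real L"
  have c0: "c \<noteq> 0" using False L by (simp add: c_def)
  have d: "((\<lambda>y::real. exp (complex_of_real y * c) / c) has_vector_derivative exp (complex_of_real y * c)) (at y within S)" for y S
  proof -
    have "((\<lambda>y::real. exp (y *\<^sub>R c) * (1/c)) has_vector_derivative (exp (y *\<^sub>R c) * c * (1/ c))) (at y within S)"
      by (intro has_vector_derivative_mult_left exp_scaleR_has_vector_derivative_right)
    then show ?thesis using c0 by (simp add: scaleR_conv_of_real)
  qed
  have le: "-pi/L \<le> pi/L" using L by (simp add: field_simps)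
  have ftc: "((\<lambda>y::real. exp (complex_of_real y * c)) has_integral
     (exp (complex_of_real (pi/L) * c) / c - exp (complex_of_real (-pi/L) * c) / c)) {-pi/L..pi/L}"
    by (rule fundamental_theorem_of_calculus[OF le]) (rule d)
  have e: "complex_of_real (pi/L) * c = complex_of_real (-pi/L) * c + (2 * of_int k * pi) * \<i>"
    using L by (simp add: c_def field_simps)
  have "exp (complex_of_real (pi/L) * c) = exp (complex_of_real (-pi/L) * c)"
    unfolding e exp_add using exp_integer_2pi[of "of_int k"] by simp
  then show ?thesis using ftc False by (simp add: c_def)
qed

lemma norm_qpow: "q > 0 \<Longrightarrow> cmod (qpow q z) = real q powr Re z"
  by (simp add: qpow_def powr_def)

lemma cterm_bound:
  assumes q: "q \<ge> 2"
  shows "cmod (cterm q a n (1/2 + \<i> * of_real t)) \<le> 3 * real q powr (of_int n / 2)"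
proof -
  define s where "s = 1/2 + \<i> * complex_of_real t"
  define x where "x = real q powr (of_int n / 2)"
  have x0: "x \<ge> 0" by (simp add: x_def)
  have t1: "cmod (qpow q (of_int n * s)) = x"
    using q by (simp add: norm_qpow s_def x_def)
  show ?thesis
  proof (cases "a = 0")
    case True
    have "cterm q a n s = qpow q (of_int n * s)" by (simp add: cterm_def True qpow_def)
    then show ?thesis using t1 x0 by (simp add: s_def[symmetric] x_def[symmetric])
  next
    case False
    have qa: "real q powr (- real a) \<le> 1/2"
    proof -
      have "real q powr (- real a) \<le> real q powr (-1)"
        using False q by (intro powr_mono) auto
      also have "\<dots> = 1 / real q" using q by (simp add: powr_minus_divide)
      also have "\<dots> \<le> 1/2" using q by simp
      finally show ?thesis .
    qed
    have n2: "cmod (qpow q (- 2 * of_nat a * s)) = real q powr (- real a)"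
      using q by (simp add: norm_qpow s_def)
    have den: "cmod (1 - qpow q (- 2 * of_nat a * s)) \<ge> 1/2"
    proof -
      have "cmod (1 - qpow q (- 2 * of_nat a * s)) \<ge> cmod (1::complex) - cmod (qpow q (- 2 * of_nat a * s))"
        by (rule norm_triangle_ineq2)
      then show ?thesis using n2 qa by simp
    qed
    have n3: "cmod (qpow q (of_int n * (1 - s) + 1 - 2 * of_nat a * s)) = x * real q powr (1 - real a)"
      using q by (simp add: norm_qpow s_def x_def powr_add[symmetric] algebra_simps)
    have p1: "real q powr (1 - real a) \<le> 1"
      using False q powr_mono[of "1 - real a" 0 "real q"] by auto
    have "cmod (qpow q (of_int n * (1 - s) + 1 - 2 * of_nat a * s) / (1 - qpow q (- 2 * of_nat a * s)))
       \<le> x / (1/2)"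
      unfolding norm_divide n3
      using den p1 x0 by (intro frac_le mult_le_one) (auto intro: mult_left_le)
    then have "cmod (qpow q (of_int n * (1 - s) + 1 - 2 * of_nat a * s) / (1 - qpow q (- 2 * of_nat a * s)))
       \<le> 2 * x" by simp
    then show ?thesis unfolding cterm_def s_def[symmetric] x_def[symmetric]
      using t1 norm_triangle_ineq[of "qpow q (of_int n * s)" "qpow q (of_int n * (1 - s) + 1 - 2 * of_nat a * s) / (1 - qpow q (- 2 * of_nat a * s))"] by linarith
  qed
qed


lemma finite_supp:
  assumes q: "q \<ge> 2" and sm: "smooth_compact_pos psi"
  shows "finite {m::int. psi (real q powr of_int m) \<noteq> 0}"
proof -
  obtain a b where ab: "0 < a" "a \<le> b" "\<And>x. x \<notin> {a..b} \<Longrightarrow> psi x = 0"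
    using sm unfolding smooth_compact_pos_def by blast
  have "{m::int. psi (real q powr of_int m) \<noteq> 0} \<subseteq> {\<lfloor>log q a\<rfloor>..\<lceil>log q b\<rceil>}"
  proof
    fix m :: int assume "m \<in> {m::int. psi (real q powr of_int m) \<noteq> 0}"
    then have m: "real q powr of_int m \<in> {a..b}" using ab(3) by blast
    have "log q a \<le> log q (real q powr of_int m)"
      using m ab q by (subst log_le_cancel_iff) auto
    moreover have "log q (real q powr of_int m) \<le> log q b"
      using m ab q by (subst log_le_cancel_iff) auto
    moreover have "log q (real q powr of_int m) = of_int m" using q by simp
    ultimately show "m \<in> {\<lfloor>log q a\<rfloor>..\<lceil>log q b\<rceil>}"
      by (auto simp: floor_le_iff le_ceiling_iff)
  qed
  then show ?thesis by (rule finite_subset) simp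
qed

lemma Hfun_finite:
  assumes "finite S" "\<And>m. m \<notin> S \<Longrightarrow> psi (real q powr of_int m) = 0"
  shows "Hfun q psi s = (\<Sum>m\<in>S. psi (real q powr of_int m) * qpow q (- of_int m * s))"
proof -
  have "Hfun q psi s = infsum (\<lambda>m::int. psi (real q powr of_int m) * qpow q (- of_int m * s)) S"
    unfolding Hfun_def by (rule infsum_cong_neutral) (use assms in auto)
  then show ?thesis using assms by simp
qed

lemma integral_term:
  assumes q: "q \<ge> 2" and S: "finite S" "\<And>m. m \<notin> S \<Longrightarrow> psi (real q powr of_int m) = 0"
  shows "of_real (ln (real q)) *
        integral {- pi / ln (real q) .. pi / ln (real q)}
          (\<lambda>y. Hfun q psi (\<i> * of_real y) * qpow q (of_int n * (\<i> * of_real y)) / (2 * of_real pi))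
     = psi (real q powr of_int n)"
proof -
  define L where "L = ln (real q)"
  have L: "L > 0" using q by (simp add: L_def)
  have eq: "Hfun q psi (\<i> * of_real y) * qpow q (of_int n * (\<i> * of_real y)) / (2 * of_real pi)
      = (\<Sum>m\<in>S. psi (real q powr of_int m) / (2 * of_real pi) *
            exp (complex_of_real y * (\<i> * of_int (n - m) * of_real L)))" for y
  proof -
    have "qpow q (- of_int m * (\<i> * of_real y)) * qpow q (of_int n * (\<i> * of_real y))
        = exp (complex_of_real y * (\<i> * of_int (n - m) * of_real L))" for m
      unfolding qpow_def exp_add[symmetric] L_def by (rule arg_cong[where f=exp]) (simp add: algebra_simps)
    note e = this
    have "Hfun q psi (\<i> * of_real y) = (\<Sum>m\<in>S. psi (real q powr of_int m) * qpow q (- of_int m * (\<i> * of_real y)))"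
      using S by (rule Hfun_finite)
    then have "Hfun q psi (\<i> * of_real y) * qpow q (of_int n * (\<i> * of_real y)) / (2 * of_real pi)
      = (\<Sum>m\<in>S. psi (real q powr of_int m) / (2 * of_real pi) * (qpow q (- of_int m * (\<i> * of_real y)) * qpow q (of_int n * (\<i> * of_real y))))"
      by (simp add: sum_distrib_left sum_distrib_right sum_divide_distrib algebra_simps)
    then show ?thesis by (simp only: e)
  qed
  have hi: "((\<lambda>y. Hfun q psi (\<i> * of_real y) * qpow q (of_int n * (\<i> * of_real y)) / (2 * of_real pi))
     has_integral (\<Sum>m\<in>S. psi (real q powr of_int m) / (2 * of_real pi) *
            (if n - m = 0 then of_real (2*pi/L) else 0))) {-pi/L..pi/L}"
    unfolding eq
    by (intro has_integral_sum S has_integral_mult_right exp_int_integral L)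
  have "(\<Sum>m\<in>S. psi (real q powr of_int m) / (2 * of_real pi) *
            (if n - m = 0 then of_real (2*pi/L) else 0))
      = (\<Sum>m\<in>S. if m = n then psi (real q powr of_int n) / of_real L else 0)"
    by (intro sum.cong) auto
  also have "\<dots> = (if n \<in> S then psi (real q powr of_int n) / of_real L else 0)"
    using S(1) by (simp add: sum.delta')
  also have "\<dots> = psi (real q powr of_int n) / of_real L" using S(2) by auto
  finally have hi2: "((\<lambda>y. Hfun q psi (\<i> * of_real y) * qpow q (of_int n * (\<i> * of_real y)) / (2 * of_real pi))
     has_integral (psi (real q powr of_int n) / of_real L)) {-pi/L..pi/L}" using hi by simp
  have "integral {-pi/L..pi/L} (\<lambda>y. Hfun q psi (\<i> * of_real y) * qpow q (of_int n * (\<i> * of_real y)) / (2 * of_real pi))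
     = psi (real q powr of_int n) / of_real L" using hi2 by (rule integral_unique)
  moreover have "-pi/L = - (pi/L)" by simp
  ultimately show ?thesis using L unfolding L_def[symmetric] by (simp del: minus_divide_left)
qed


theorem lemma3p7:
  fixes q :: nat and psi :: "real \<Rightarrow> complex"
  assumes "prime q" and "q > 3"
    and "CARD('a::{field,finite}) = q"
    and "smooth_compact_pos psi"
  shows "\<exists>C::real. \<forall>(A::'a poly) (t::real).
           lead_coeff A = 1 \<and> irreducible A \<and> t \<noteq> 0 \<longrightarrow>
           cmod (I1 q psi (degree A) t) \<le> C"
proof -
  have q: "q \<ge> 2" using assms(2) by simp
  define S where "S = {m::int. psi (real q powr of_int m) \<noteq> 0}"
  have fS: "finite S" unfolding S_def by (rule finite_supp[OF q assms(4)])
  have zS: "\<And>m. m \<notin> S \<Longrightarrow> psi (real q powr of_int m) = 0" by (simp add: S_def)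
  define C where "C = (\<Sum>n\<in>S. cmod (psi (real q powr of_int n)) * (3 * real q powr (of_int n / 2))\<^sup>2)"
  have "cmod (I1 q psi a t) \<le> C" for a t
  proof -
    have "I1 q psi a t = infsum (\<lambda>n::int. psi (real q powr of_int n) *
        of_real ((cmod (cterm q a n (1/2 + \<i> * of_real t)))\<^sup>2)) UNIV"
      unfolding I1_def by (intro infsum_cong arg_cong2[where f="(*)"] integral_term[of q S psi, OF q fS zS] refl)
    also have "\<dots> = infsum (\<lambda>n::int. psi (real q powr of_int n) *
        of_real ((cmod (cterm q a n (1/2 + \<i> * of_real t)))\<^sup>2)) S"
      by (rule infsum_cong_neutral) (use zS in auto)
    also have "\<dots> = (\<Sum>n\<in>S. psi (real q powr of_int n) *
        of_real ((cmod (cterm q a n (1/2 + \<i> * of_real t)))\<^sup>2))"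
      using fS by simp
    finally have eq: "I1 q psi a t = \<dots>" .
    have "cmod (I1 q psi a t) \<le> (\<Sum>n\<in>S. cmod (psi (real q powr of_int n) *
        of_real ((cmod (cterm q a n (1/2 + \<i> * of_real t)))\<^sup>2)))"
      unfolding eq by (rule norm_sum)
    also have "\<dots> \<le> C" unfolding C_def
    proof (rule sum_mono)
      fix n assume "n \<in> S"
      have b: "cmod (cterm q a n (1/2 + \<i> * of_real t)) \<le> 3 * real q powr (of_int n / 2)"
        by (rule cterm_bound[OF q])
      have "(cmod (cterm q a n (1/2 + \<i> * of_real t)))\<^sup>2 \<le> (3 * real q powr (of_int n / 2))\<^sup>2"
        using b by (intro power_mono) auto
      then show "cmod (psi (real q powr of_int n) *
        of_real ((cmod (cterm q a n (1/2 + \<i> * of_real t)))\<^sup>2))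
        \<le> cmod (psi (real q powr of_int n)) * (3 * real q powr (of_int n / 2))\<^sup>2"
        unfolding norm_mult norm_of_real by (simp del: of_real_power add: mult_left_mono)
    qed
    finally show ?thesis .
  qed
  then show ?thesis by blast
qed

end
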